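(* Let $g\ge 0$ and $n\ge 1$. The number of pseudo-3-regular graphs corresponding to (pants decompositions of) hyperbolic surfaces of genus $g$ with $n$ cusps is at most $n\,g^{3g}(3g-3+3n)^n$.
   Context: A pants decomposition of a finite-area hyperbolic surface of genus $g$ with $n$ cusps is a collection of disjoint simple closed geodesics whose complement is a disjoint union of pairs of pants (spheres with three holes, each hole being a boundary geodesic or a cusp). A connected graph with free edges (edges having a free, unattached end) is pseudo-3-regular if every node has exactly three emanating half-edges (a loop counts twice), which may or may not have a free end. The graph corresponding to a pants decomposition has one node per pair of pants, one half-edge per boundary component or cusp of that pair of pants; two half-edges are joined into an edge when the corresponding boundary geodesics are glued in the surface, and half-edges corresponding to cusps are free edges. *)

theory Defs
  imports Main
begin

text \<open>A graph with free edges, given by half-edges: a finite node set V, a finite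
 half-edge set H, a map node assigning each half-edge its node, and an involution
 pair on H gluing two half-edges into an edge; a fixed point of pair is a half-edge
 with a free (unattached) end, i.e. a free edge. A loop consists of two half-edges
 at the same node and hence counts twice.\<close>

type_synonym hgraph = "nat set \<times> nat set \<times> (nat \<Rightarrow> nat) \<times> (nat \<Rightarrow> nat)"

definition wf_hgraph :: "hgraph \<Rightarrow> bool" where
  "wf_hgraph G = (case G of (V, H, node, pair) \<Rightarrow>
     finite V \<and> finite H \<and> (\<forall>x\<in>H. node x \<in> V) \<and>
     (\<forall>x\<in>H. pair x \<in> H \<and> pair (pair x) = x))"

definition adjacent :: "hgraph \<Rightarrow> (nat \<times> nat) set" where
  "adjacent G = (case G of (V, H, node, pair) \<Rightarrow>
     {(node x, node (pair x)) | x. x \<in> H})"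

definition connected_hgraph :: "hgraph \<Rightarrow> bool" where
  "connected_hgraph G = (case G of (V, H, node, pair) \<Rightarrow>
     V \<noteq> {} \<and> (\<forall>u\<in>V. \<forall>v\<in>V. (u, v) \<in> (adjacent G)\<^sup>*))"

definition pseudo_3_regular :: "hgraph \<Rightarrow> bool" where
  "pseudo_3_regular G = (case G of (V, H, node, pair) \<Rightarrow>
     wf_hgraph G \<and> connected_hgraph G \<and> (\<forall>v\<in>V. card {x\<in>H. node x = v} = 3))"

definition free_edges :: "hgraph \<Rightarrow> nat set" where
  "free_edges G = (case G of (V, H, node, pair) \<Rightarrow> {x\<in>H. pair x = x})"

definition nodes :: "hgraph \<Rightarrow> nat set" where
  "nodes G = fst G"

text \<open>A pseudo-3-regular graph corresponds to a pants decomposition of a finite-area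
 hyperbolic surface of genus g with n cusps iff it has n free edges and 2g-2+n nodes
 (one node per pair of pants; a surface of signature (g,n) has 2g-2+n pants).\<close>

definition surface_graph :: "nat \<Rightarrow> nat \<Rightarrow> hgraph \<Rightarrow> bool" where
  "surface_graph g n G \<longleftrightarrow> pseudo_3_regular G \<and> card (free_edges G) = n \<and>
     int (card (nodes G)) = 2 * int g - 2 + int n"

definition hgraph_iso :: "hgraph \<Rightarrow> hgraph \<Rightarrow> bool" where
  "hgraph_iso G1 G2 = (case G1 of (V1, H1, node1, pair1) \<Rightarrow> case G2 of (V2, H2, node2, pair2) \<Rightarrow>
     (\<exists>f h. bij_betw f V1 V2 \<and> bij_betw h H1 H2 \<and>
        (\<forall>x\<in>H1. node2 (h x) = f (node1 x) \<and> pair2 (h x) = h (pair1 x))))"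

definition num_surface_graphs :: "nat \<Rightarrow> nat \<Rightarrow> nat" where
  "num_surface_graphs g n =
     card ({G. surface_graph g n G} // {(G1, G2). hgraph_iso G1 G2})"

end

theory Submission
  imports Defs "HOL-Library.FuncSet"
begin

lemma pow_succ_aux: "(g::nat) * (g+1)^m \<ge> g^(m+1) + m * g^m"
proof (induction m)
  case 0 then show ?case by simp
next
  case (Suc m)
  have "g * (g+1)^(Suc m) = (g+1) * (g*(g+1)^m)" by (simp add: algebra_simps)
  also have "\<dots> \<ge> (g+1) * (g^(m+1) + m * g^m)" using Suc by (intro mult_left_mono) auto
  finally have "g * (g+1)^(Suc m) \<ge> (g+1) * (g^(m+1) + m * g^m)" .
  moreover have "(g+1) * (g^(m+1) + m * g^m) \<ge> g^(Suc m+1) + Suc m * g^(Suc m)"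
    by (simp add: algebra_simps)
  ultimately show ?case by linarith
qed

lemma pow_succ_2: assumes "(g::nat) \<ge> 1" shows "(g+1)^g \<ge> 2 * g^g"
proof -
  have e: "g^(g+1) + g*g^g = g*(2*g^g)" by simp
  have "g * (g+1)^g \<ge> g * (2*g^g)" using pow_succ_aux[of g g] unfolding e .
  then show ?thesis using assms by (metis mult_le_cancel1 not_one_le_zero neq0_conv)
qed

lemma pow_succ_8: assumes "(g::nat) \<ge> 1" shows "(g+1)^(3*g) \<ge> 8 * g^(3*g)"
proof -
  have "(g+1)^(3*g) = ((g+1)^g)^3" by (simp add: power_mult[symmetric] mult.commute)
  also have "\<dots> \<ge> (2*g^g)^3" using pow_succ_2[OF assms] by (intro power_mono) auto
  also have "(2*g^g)^3 = 8 * g^(3*g)" by (simp add: power_mult_distrib power_mult[symmetric] mult.commute)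
  finally show ?thesis .
qed

lemma fact4: "(fact (m+4)::nat) = (m+4)*(m+3)*(m+2)*(m+1) * fact m"
proof -
  have "m+4 = Suc (Suc (Suc (Suc m)))" by simp
  then have "(fact (m+4)::nat) = Suc (Suc (Suc (Suc m))) * (Suc (Suc (Suc m)) * (Suc (Suc m) * (Suc m * fact m)))"
    by (simp only: fact_Suc of_nat_id)
  also have "\<dots> = (m+4)*(m+3)*(m+2)*(m+1) * fact m" by (simp add: algebra_simps)
  finally show ?thesis .
qed
lemma fact2: "(fact (m+2)::nat) = (m+2)*(m+1) * fact m"
proof -
  have "m+2 = Suc (Suc m)" by simp
  then have "(fact (m+2)::nat) = Suc (Suc m) * (Suc m * fact m)"
    by (simp only: fact_Suc of_nat_id)
  also have "\<dots> = (m+2)*(m+1) * fact m" by (simp add: algebra_simps)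
  finally show ?thesis .
qed

definition BB :: "nat \<Rightarrow> nat \<Rightarrow> nat" where
  "BB g n = n * g ^ (3 * g) * (3 * g + 3 * n - 3) ^ n"

definition PP :: "nat \<Rightarrow> nat \<Rightarrow> bool" where
  "PP g n \<longleftrightarrow> fact (2*(2*g+n-2)+1) \<le> BB g n * fact (2*g+n-2-1) * fact n * 2^g * fact g"

lemma poly_n: assumes "k \<ge> 1" "k = 2*g+n-2" "n \<ge> 1"
  shows "n * ((2*k+3)*(2*k+2)) \<le> (n+1)*(n+1) * (3*g+3*n) * (k::nat)"
proof -
  have a: "2*(g+n) \<ge> k+3" using assms by arith
  have b: "(n+1)*(n+1) \<ge> 4*n"
  proof - have "(n+1)*(n+1) = 4*n + (n-1)*(n-1)" using assms(3) by (cases n) (auto simp: algebra_simps) then show ?thesis by simp qed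
  have c: "2*((2*k+3)*(2*k+2)) \<le> 12*k*(k+3)" using assms(1) by (simp add: algebra_simps)
  have "2 * (n * ((2*k+3)*(2*k+2))) \<le> n * (12*k*(k+3))" using c by (metis mult.left_commute mult_le_mono2)
  also have "\<dots> = 3 * (4*n) * (k+3) * k" by (simp add: algebra_simps)
  also have "\<dots> \<le> 3 * ((n+1)*(n+1)) * (2*(g+n)) * k" 
  proof -
    have "3 * (4*n) * (k+3) \<le> 3 * ((n+1)*(n+1)) * (2*(g+n))" 
    proof -
      have "3*(4*n) \<le> 3*((n+1)*(n+1))" using b by simp
      from mult_mono[OF this a] show ?thesis by simp
    qed
    then show ?thesis by (rule mult_right_mono) simp
  qed
  also have "\<dots> = 2 * ((n+1)*(n+1) * (3*g+3*n) * k)" by (simp add: algebra_simps)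
  finally show ?thesis by simp
qed

lemma PP_step_n: assumes P: "PP g n" and k1: "2*g+n \<ge> 3" and n1: "n \<ge> 1"
  shows "PP g (n+1)"
proof -
  define k where "k = 2*g+n-2"
  have k1': "k \<ge> 1" using k1 unfolding k_def by arith
  define X :: nat where "X = fact (k-1) * fact n * 2^g * fact g"
  define G where "G = g^(3*g)"
  define c where "c = 3*g+3*n-3"
  have P': "fact (2*k+1) \<le> n * G * c^n * X" using P unfolding PP_def BB_def X_def G_def c_def k_def
    by (simp add: mult.assoc)
  have kk: "2*g+(n+1)-2 = k+1" unfolding k_def using k1 by arith
  have f1: "fact (2*(k+1)+1) = (2*k+3)*(2*k+2)*(fact (2*k+1)::nat)"
    by (simp add: algebra_simps fact_Suc numeral_eq_Suc) 
  have f2: "(fact k :: nat) = k * fact (k-1)" using k1' by (cases k) auto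
  have f3: "(fact (n+1)::nat) = (n+1) * fact n" by simp
  have cc: "3*g+3*(n+1)-3 = 3*g+3*n" by simp
  have cle: "c^n \<le> (3*g+3*n)^n" unfolding c_def by (intro power_mono) auto
  have "fact (2*(k+1)+1) \<le> (2*k+3)*(2*k+2) * (n * G * c^n * X)" unfolding f1 using P' by simp
  also have "\<dots> = (n * ((2*k+3)*(2*k+2))) * (G * c^n * X)" by (simp add: algebra_simps)
  also have "\<dots> \<le> ((n+1)*(n+1) * (3*g+3*n) * k) * (G * c^n * X)"
    using poly_n[OF k1' k_def n1] by (rule mult_right_mono) simp
  also have "\<dots> \<le> ((n+1)*(n+1) * (3*g+3*n) * k) * (G * (3*g+3*n)^n * X)"
    using cle by (intro mult_left_mono) auto
  also have "\<dots> = BB g (n+1) * fact k * fact (n+1) * 2^g * fact g"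
    unfolding BB_def cc f2 f3 X_def G_def by (simp add: algebra_simps)
  finally show ?thesis unfolding PP_def kk by simp
qed

lemma poly_g: assumes "(g::nat) \<ge> 1"
  shows "g*((4*g+1)*(4*g+2)*(4*g+3)) \<le> 8*(2*g-1)*(g+1)^5"
proof (cases "g = 1")
  case True then show ?thesis unfolding True by (simp add: numeral_2_eq_2[symmetric])
next
  case False
  then have g2: "g \<ge> 2" using assms by simp
  have a: "(4*g+1)*(4*g+2)*(4*g+3) \<le> (4*g+4)*(4*g+4)*(4*g+4)" by (intro mult_mono) auto
  have b: "(4*g+4)*(4*g+4)*(4*g+4) = 64*(g+1)^3" by (simp add: algebra_simps power3_eq_cube)
  have sq: "(g+1)^2 = 4*g + (g-1)*(g-1)" using assms by (cases g) (auto simp: algebra_simps power2_eq_square)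
  have c: "3*(4*g) \<le> (2*g-1)*(g+1)^2" using g2 sq by (intro mult_mono) auto
  have "g*((4*g+1)*(4*g+2)*(4*g+3)) \<le> g*(64*(g+1)^3)" using a b by simp
  also have "\<dots> = 8*(8*g)*(g+1)^3" by simp
  also have "\<dots> \<le> 8*((2*g-1)*(g+1)^2)*(g+1)^3"
  proof -
    have "8*g \<le> (2*g-1)*(g+1)^2" using c by simp
    then show ?thesis by (intro mult_right_mono mult_left_mono) auto
  qed
  also have "\<dots> = 8*(2*g-1)*(g+1)^5" by (simp add: algebra_simps power_add[symmetric])
  finally show ?thesis .
qed

lemma PP_step_g: assumes P: "PP g 1" and g1: "g \<ge> 1"
  shows "PP (g+1) 1"
proof -
  define Y :: nat where "Y = fact (2*g-2) * 2^g * fact g"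
  define Q :: nat where "Q = (4*g+3)*(4*g+2)*(4*g+1)*(4*g)"
  have P': "fact (4*g-1) \<le> g^(3*g) * (3*g) * Y"
  proof -
    have e1: "2*(2*g+1-2)+1 = 4*g-1" "2*g+1-2-1 = 2*g-2" "3*g+3*1-3 = 3*g" using g1 by auto
    show ?thesis using P unfolding PP_def BB_def Y_def e1 by (simp add: algebra_simps)
  qed
  have f1: "(fact (4*g+3)::nat) = Q * fact (4*g-1)"
  proof -
    have e: "4*g-1+4 = 4*g+3" "4*g-1+3=4*g+2" "4*g-1+2 = 4*g+1" "4*g-1+1 = 4*g" using g1 by auto
    show ?thesis using fact4[of "4*g-1"] unfolding e Q_def .
  qed
  have f2: "(fact (2*g)::nat) = (2*g)*(2*g-1)*fact (2*g-2)"
  proof -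
    have e: "2*g-2+2 = 2*g" "2*g-2+1 = 2*g-1" using g1 by auto
    show ?thesis using fact2[of "2*g-2"] unfolding e .
  qed
  have pw: "8 * g^(3*g) \<le> (g+1)^(3*g)" using pow_succ_8[OF g1] .
  have pg: "g*((4*g+1)*(4*g+2)*(4*g+3)) \<le> 8*(2*g-1)*(g+1)^5" using poly_g[OF g1] .
  have Qe: "Q * (3*g) = 12 * g * (g*((4*g+1)*(4*g+2)*(4*g+3)))" unfolding Q_def by (simp add: algebra_simps)
  have "fact (4*g+3) \<le> Q * (g^(3*g) * (3*g) * Y)" unfolding f1 using P' by simp
  also have "\<dots> = (Q * (3*g)) * g^(3*g) * Y" by (simp add: algebra_simps)
  also have "\<dots> \<le> (12 * g * (8*(2*g-1)*(g+1)^5)) * g^(3*g) * Y"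
    unfolding Qe using pg by (intro mult_right_mono mult_left_mono) auto
  also have "\<dots> = (12 * g * ((2*g-1)*(g+1)^5)) * (8 * g^(3*g)) * Y" by (simp add: algebra_simps)
  also have "\<dots> \<le> (12 * g * ((2*g-1)*(g+1)^5)) * (g+1)^(3*g) * Y"
    using pw by (intro mult_right_mono mult_left_mono) auto
  also have "\<dots> = BB (g+1) 1 * fact (2*g) * fact 1 * 2^(g+1) * fact (g+1)"
  proof -
    obtain d where d: "2*g-1 = d" by simp
    have b: "BB (g+1) 1 = (g+1)^(3*g) * (g+1)^3 * (3*(g+1))" unfolding BB_def by (simp add: power_add)
    have p5: "(g+1)^5 = (g+1)^3*(g+1)*(g+1)" by (simp add: eval_nat_numeral)
    show ?thesis unfolding b f2 Y_def d p5 by (simp add: algebra_simps)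
  qed
  finally show ?thesis unfolding PP_def
  proof -
    assume h: "fact (4*g+3) \<le> BB (g+1) 1 * fact (2*g) * fact 1 * 2^(g+1) * fact (g+1)"
    have e: "2*(2*(g+1)+1-2)+1 = 4*g+3" "2*(g+1)+1-2-1 = 2*g" by auto
    show "fact (2*(2*(g+1)+1-2)+1) \<le> BB (g+1) 1 * fact (2*(g+1)+1-2-1) * fact 1 * 2^(g+1) * fact (g+1)"
      unfolding e using h .
  qed
qed

lemma f3: "(fact 3::nat) = 6" by (simp add: fact_numeral)

lemma PP_g1: "g \<ge> 1 \<Longrightarrow> PP g 1"
proof (induction g rule: dec_induct)
  case base show ?case unfolding PP_def BB_def by (simp add: f3)
next
  case (step m) then show ?case using PP_step_g[of m] by simp
qed

lemma PP_all: assumes "n \<ge> 1" "2*g+n \<ge> 3" shows "PP g n"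
proof (cases "g = 0")
  case True
  then have n3: "3 \<le> n" using assms by simp
  have "PP 0 n" using n3
  proof (induction n rule: dec_induct)
    case base show ?case unfolding PP_def BB_def by (simp add: f3)
  next
    case (step m) then show ?case using PP_step_n[of 0 m] by simp
  qed
  then show ?thesis using True by simp
next
  case False
  then have g1: "g \<ge> 1" by simp
  show ?thesis using assms(1)
  proof (induction n rule: dec_induct)
    case base show ?case using PP_g1[OF g1] .
  next
    case (step m) then show ?case using PP_step_n[of g m] g1 by simp
  qed
qed

definition invs :: "nat set \<Rightarrow> nat \<Rightarrow> (nat \<Rightarrow> nat) set" where
  "invs S n = {q. (\<forall>x. x \<notin> S \<longrightarrow> q x = x) \<and> (\<forall>x\<in>S. q x \<in> S \<and> q (q x) = x) \<and> card {x\<in>S. q x = x} = n}"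

lemma ext_funs_finite:
  assumes "finite S"
  shows "finite {q::nat\<Rightarrow>nat. (\<forall>x. x \<notin> S \<longrightarrow> q x = x) \<and> (\<forall>x\<in>S. q x \<in> S)}"
proof -
  have "{q::nat\<Rightarrow>nat. (\<forall>x. x \<notin> S \<longrightarrow> q x = x) \<and> (\<forall>x\<in>S. q x \<in> S)}
        \<subseteq> (\<lambda>f x. if x \<in> S then f x else x) ` (S \<rightarrow>\<^sub>E S)"
  proof
    fix q :: "nat \<Rightarrow> nat" assume q: "q \<in> {q. (\<forall>x. x \<notin> S \<longrightarrow> q x = x) \<and> (\<forall>x\<in>S. q x \<in> S)}"
    have "q = (\<lambda>x. if x \<in> S then restrict q S x else x)" using q by (auto simp: fun_eq_iff)
    moreover have "restrict q S \<in> S \<rightarrow>\<^sub>E S" using q by auto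
    ultimately show "q \<in> (\<lambda>f x. if x \<in> S then f x else x) ` (S \<rightarrow>\<^sub>E S)" by blast
  qed
  moreover have "finite ((\<lambda>f x. if x \<in> S then f x else x) ` (S \<rightarrow>\<^sub>E S))"
    using assms by (intro finite_imageI finite_PiE) auto
  ultimately show ?thesis by (rule finite_subset)
qed

lemma invs_finite: "finite S \<Longrightarrow> finite (invs S n)"
  by (rule finite_subset[OF _ ext_funs_finite[of S]]) (auto simp: invs_def)

lemma invs_card:
  assumes "finite S" "card S = n + 2*g"
  shows "card (invs S n) * (fact n * 2^g * fact g) \<le> fact (card S)"
  using assms
proof (induction "card S" arbitrary: S n g rule: less_induct)
  case less
  show ?case
  proof (cases "S = {}")
    case True
    then have n0: "n = 0" "g = 0" using less.prems by auto
    have "invs S n \<subseteq> {\<lambda>x. x}" using True by (auto simp: invs_def fun_eq_iff)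
    then have "card (invs S n) \<le> card {\<lambda>x::nat. x}" by (intro card_mono) auto
    then have "card (invs S n) \<le> 1" by simp
    then show ?thesis using n0 True by simp
  next
    case False
    then obtain a where a: "a \<in> S" by blast
    define m where "m = card S"
    define S' where "S' = S - {a}"
    have fS: "finite S" using less.prems by simp
    have fS': "finite S'" using fS unfolding S'_def by simp
    have cS': "card S' = m - 1" unfolding S'_def m_def using a fS by simp
    have m1: "m \<ge> 1" unfolding m_def using a fS card_0_eq by fastforce
    define F :: nat where "F = fact n * 2^g * fact g"
    define X1 where "X1 = {q \<in> invs S n. q a = a}"
    define Xb where "Xb b = {q \<in> invs S n. q a = b}" for b
    have split: "invs S n \<subseteq> X1 \<union> (\<Union>b\<in>S'. Xb b)"
    proof
      fix q assume q: "q \<in> invs S n"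
      then have "q a \<in> S" using a by (auto simp: invs_def)
      then show "q \<in> X1 \<union> (\<Union>b\<in>S'. Xb b)" using q unfolding X1_def Xb_def S'_def by auto
    qed
    have "card (invs S n) \<le> card (X1 \<union> (\<Union>b\<in>S'. Xb b))"
    proof (rule card_mono[OF _ split])
      show "finite (X1 \<union> (\<Union>b\<in>S'. Xb b))" using fS'
        by (intro finite_UnI finite_UN_I) (auto simp: X1_def Xb_def intro: finite_subset[OF _ invs_finite[OF fS]])
    qed
    also have "\<dots> \<le> card X1 + card (\<Union>b\<in>S'. Xb b)" by (rule card_Un_le)
    also have "\<dots> \<le> card X1 + (\<Sum>b\<in>S'. card (Xb b))" using card_UN_le[OF fS'] by simp
    finally have cle: "card (invs S n) \<le> card X1 + (\<Sum>b\<in>S'. card (Xb b))" .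
    have B1: "card X1 * F \<le> n * fact (m - 1)"
    proof (cases "n = 0")
      case True
      have "X1 = {}"
      proof (rule ccontr)
        assume "X1 \<noteq> {}"
        then obtain q where q: "q \<in> invs S n" "q a = a" unfolding X1_def by auto
        then have "card {x\<in>S. q x = x} = 0" using True by (simp add: invs_def)
        moreover have "a \<in> {x\<in>S. q x = x}" using q a by simp
        ultimately show False using fS by auto
      qed
      then show ?thesis by simp
    next
      case False
      have sub: "X1 \<subseteq> invs S' (n-1)"
      proof
        fix q assume "q \<in> X1"
        then have q: "q \<in> invs S n" "q a = a" unfolding X1_def by auto
        have e: "{x\<in>S'. q x = x} = {x\<in>S. q x = x} - {a}" unfolding S'_def by auto
        have "card {x\<in>S'. q x = x} = n - 1" unfolding e using q a fS by (simp add: invs_def)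
        moreover have "\<forall>x. x \<notin> S' \<longrightarrow> q x = x" using q unfolding S'_def invs_def by auto
        moreover have "\<forall>x\<in>S'. q x \<in> S' \<and> q (q x) = x"
        proof
          fix x assume x: "x \<in> S'"
          then have "q x \<in> S" "q (q x) = x" using q unfolding S'_def invs_def by auto
          moreover have "q x \<noteq> a" using x q \<open>q (q x) = x\<close> unfolding S'_def by auto
          ultimately show "q x \<in> S' \<and> q (q x) = x" unfolding S'_def by auto
        qed
        ultimately show "q \<in> invs S' (n-1)" unfolding invs_def by auto
      qed
      have lt: "card S' < card S" using cS' m1 m_def by simp
      have IH: "card (invs S' (n-1)) * (fact (n-1) * 2^g * fact g) \<le> fact (card S')"
      proof -
        have "card S' = (n-1) + 2*g" using cS' less.prems False m_def by simp
        from less.hyps[OF lt fS' this] show ?thesis .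
      qed
      have "card X1 \<le> card (invs S' (n-1))" by (rule card_mono[OF invs_finite[OF fS'] sub])
      then have "card X1 * F \<le> card (invs S' (n-1)) * F" by simp
      also have "\<dots> = n * (card (invs S' (n-1)) * (fact (n-1) * 2^g * fact g))"
        unfolding F_def using False by (cases n) (auto simp: algebra_simps)
      also have "\<dots> \<le> n * fact (m-1)" using IH cS' by simp
      finally show ?thesis .
    qed
    have B2: "card (Xb b) * F \<le> 2*g * fact (m - 2)" if b: "b \<in> S'" for b
    proof (cases "g = 0")
      case True
      have "Xb b = {}"
      proof (rule ccontr)
        assume "Xb b \<noteq> {}"
        then obtain q where q: "q \<in> invs S n" "q a = b" unfolding Xb_def by auto
        have ba: "b \<noteq> a" "b \<in> S" using b unfolding S'_def by auto
        have "q b = a" using q a unfolding invs_def by auto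
        then have "{x\<in>S. q x = x} \<subseteq> S - {a,b}" using q ba by auto
        then have "card {x\<in>S. q x = x} \<le> card (S - {a,b})" using fS by (intro card_mono) auto
        also have "\<dots> = card S - 2" using a ba fS by (simp add: card_Diff_subset)
        finally have c1: "card {x\<in>S. q x = x} \<le> card S - 2" .
        have "card {a,b} \<le> card S" using a ba fS by (intro card_mono) auto
        then have c2: "card S \<ge> 2" using ba by simp
        have "card {x\<in>S. q x = x} = card S" using q less.prems True by (simp add: invs_def)
        then show False using c1 c2 by simp
      qed
      then show ?thesis by simp
    next
      case False
      have ba: "b \<noteq> a" "b \<in> S" using b unfolding S'_def by auto
      define S'' where "S'' = S' - {b}"
      have fS'': "finite S''" using fS' unfolding S''_def by simp
      have cS'': "card S'' = m - 2" unfolding S''_def using b fS' cS' by simp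
      define phi where "phi q = q(a:=a, b:=b)" for q :: "nat \<Rightarrow> nat"
      have inj: "inj_on phi (Xb b)"
      proof (rule inj_onI)
        fix q1 q2 assume q1: "q1 \<in> Xb b" and q2: "q2 \<in> Xb b" and e: "phi q1 = phi q2"
        have "q1 b = a" "q2 b = a" "q1 a = b" "q2 a = b" using q1 q2 a unfolding Xb_def invs_def by auto
        note h = this
        show "q1 = q2"
        proof
          fix x show "q1 x = q2 x"
          proof (cases "x = a \<or> x = b")
            case True then show ?thesis using h by auto
          next
            case False
            have "phi q1 x = phi q2 x" using e by simp
            then show ?thesis using False unfolding phi_def by simp
          qed
        qed
      qed
      have img: "phi ` (Xb b) \<subseteq> invs S'' n"
      proof
        fix r assume "r \<in> phi ` (Xb b)"
        then obtain q where q: "q \<in> invs S n" "q a = b" and r: "r = phi q" unfolding Xb_def by auto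
        have qb: "q b = a" using q a unfolding invs_def by auto
        have e: "{x\<in>S''. r x = x} = {x\<in>S. q x = x}" using q qb ba unfolding r phi_def S''_def S'_def by auto
        have "card {x\<in>S''. r x = x} = n" unfolding e using q by (simp add: invs_def)
        moreover have "\<forall>x. x \<notin> S'' \<longrightarrow> r x = x" using q unfolding r phi_def S''_def S'_def invs_def by auto
        moreover have "\<forall>x\<in>S''. r x \<in> S'' \<and> r (r x) = x"
        proof
          fix x assume x: "x \<in> S''"
          then have xs: "x \<in> S" "x \<noteq> a" "x \<noteq> b" unfolding S''_def S'_def by auto
          have "q x \<in> S" "q (q x) = x" using q xs unfolding invs_def by auto
          moreover have "q x \<noteq> a" using xs q \<open>q (q x) = x\<close> by auto
          moreover have "q x \<noteq> b" using xs qb \<open>q (q x) = x\<close> by auto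
          ultimately show "r x \<in> S'' \<and> r (r x) = x" using xs unfolding r phi_def S''_def S'_def by auto
        qed
        ultimately show "r \<in> invs S'' n" unfolding invs_def by auto
      qed
      have lt: "card S'' < card S" using cS'' m1 m_def False less.prems by simp
      have gg: "card S'' = n + 2*(g-1)" using cS'' less.prems m_def False by simp
      have IH: "card (invs S'' n) * (fact n * 2^(g-1) * fact (g-1)) \<le> fact (card S'')"
        using less.hyps[OF lt fS'' gg] .
      have "card (Xb b) \<le> card (invs S'' n)"
        using card_inj_on_le[OF inj img invs_finite[OF fS'']] .
      then have "card (Xb b) * F \<le> card (invs S'' n) * F" by simp
      also have "\<dots> = 2*g * (card (invs S'' n) * (fact n * 2^(g-1) * fact (g-1)))"
        unfolding F_def using False by (cases g) (auto simp: algebra_simps)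
      also have "\<dots> \<le> 2*g * fact (m-2)" using IH cS'' by simp
      finally show ?thesis .
    qed
    have cS'm: "card S' = m - 1" by (rule cS')
    have "card (invs S n) * F \<le> (card X1 + (\<Sum>b\<in>S'. card (Xb b))) * F" using cle by simp
    also have "\<dots> = card X1 * F + (\<Sum>b\<in>S'. card (Xb b) * F)" by (simp add: add_mult_distrib sum_distrib_right)
    also have "\<dots> \<le> n * fact (m-1) + (\<Sum>b\<in>S'. 2*g * fact (m-2))"
      using B1 B2 by (intro add_mono sum_mono) auto
    also have "\<dots> = n * fact (m-1) + 2*g * ((m-1) * fact (m-2))" using cS' by simp
    also have "\<dots> \<le> n * fact (m-1) + 2*g * fact (m-1)"
    proof -
      have "(m-1) * fact (m-2) \<le> (fact (m-1) :: nat)"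
      proof (cases "m = 1")
        case True then show ?thesis by simp
      next
        case False then have "m - 1 = Suc (m-2)" using m1 by simp
        then show ?thesis by (metis fact_Suc le_refl of_nat_id)
      qed
      then show ?thesis by simp
    qed
    also have "\<dots> = (n + 2*g) * fact (m-1)" by (simp add: algebra_simps)
    also have "\<dots> = fact m"
    proof -
      have "n + 2*g = m" using less.prems m_def by simp
      moreover obtain j where "m = Suc j" using m1 by (cases m) auto
      ultimately show ?thesis by simp
    qed
    finally show ?thesis unfolding F_def m_def .
  qed
qed

lemma rtrancl_map_lem:
  assumes "\<And>a b. (a,b) \<in> R \<Longrightarrow> (F a, F b) \<in> R'" "(u,v) \<in> R\<^sup>*"
  shows "(F u, F v) \<in> R'\<^sup>*"
  using assms(2)
proof (induction rule: rtrancl_induct)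
  case base then show ?case by simp
next
  case (step y z)
  have "(F y, F z) \<in> R'" using assms(1)[OF step.hyps(2)] .
  from rtrancl_into_rtrancl[OF step.IH this] show ?case .
qed

lemma iso_trans:
  assumes "hgraph_iso A B" "hgraph_iso B C" shows "hgraph_iso A C"
proof -
  obtain V1 H1 n1 p1 where A: "A = (V1,H1,n1,p1)" by (cases A) auto
  obtain V2 H2 n2 p2 where B: "B = (V2,H2,n2,p2)" by (cases B) auto
  obtain V3 H3 n3 p3 where C: "C = (V3,H3,n3,p3)" by (cases C) auto
  obtain f h where fh: "bij_betw f V1 V2" "bij_betw h H1 H2" "\<forall>x\<in>H1. n2 (h x) = f (n1 x) \<and> p2 (h x) = h (p1 x)"
    using assms(1) unfolding A B hgraph_iso_def by auto
  obtain f' h' where fh': "bij_betw f' V2 V3" "bij_betw h' H2 H3" "\<forall>x\<in>H2. n3 (h' x) = f' (n2 x) \<and> p3 (h' x) = h' (p2 x)"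
    using assms(2) unfolding B C hgraph_iso_def by auto
  have "bij_betw (f' \<circ> f) V1 V3" "bij_betw (h' \<circ> h) H1 H3" using fh fh' by (auto intro: bij_betw_trans)
  moreover have "\<forall>x\<in>H1. n3 ((h' \<circ> h) x) = (f' \<circ> f) (n1 x) \<and> p3 ((h' \<circ> h) x) = (h' \<circ> h) (p1 x)"
  proof
    fix x assume x: "x \<in> H1"
    then have hx: "h x \<in> H2" using fh(2) bij_betwE by blast
    show "n3 ((h' \<circ> h) x) = (f' \<circ> f) (n1 x) \<and> p3 ((h' \<circ> h) x) = (h' \<circ> h) (p1 x)"
      using fh(3) fh'(3) x hx by simp
  qed
  ultimately show ?thesis unfolding A C hgraph_iso_def by blast
qed

lemma iso_sym:
  assumes "wf_hgraph A" "hgraph_iso A B" shows "hgraph_iso B A"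
proof -
  obtain V1 H1 n1 p1 where A: "A = (V1,H1,n1,p1)" by (cases A) auto
  obtain V2 H2 n2 p2 where B: "B = (V2,H2,n2,p2)" by (cases B) auto
  obtain f h where fh: "bij_betw f V1 V2" "bij_betw h H1 H2" "\<forall>x\<in>H1. n2 (h x) = f (n1 x) \<and> p2 (h x) = h (p1 x)"
    using assms(2) unfolding A B hgraph_iso_def by auto
  have wf: "\<forall>x\<in>H1. n1 x \<in> V1" "\<forall>x\<in>H1. p1 x \<in> H1" using assms(1) unfolding A wf_hgraph_def by auto
  define f' where "f' = inv_into V1 f"
  define h' where "h' = inv_into H1 h"
  have b1: "bij_betw f' V2 V1" "bij_betw h' H2 H1" unfolding f'_def h'_def using fh by (auto intro: bij_betw_inv_into)
  have "\<forall>y\<in>H2. n1 (h' y) = f' (n2 y) \<and> p1 (h' y) = h' (p2 y)"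
  proof
    fix y assume y: "y \<in> H2"
    define x where "x = h' y"
    have x: "x \<in> H1" "h x = y" unfolding x_def h'_def using y fh(2)
      by (auto simp: bij_betw_def f_inv_into_f inv_into_into)
    have e1: "n2 y = f (n1 x)" "p2 y = h (p1 x)" using fh(3) x by auto
    have i1: "inj_on f V1" "inj_on h H1" using fh(1,2) by (auto simp: bij_betw_def)
    have "f' (n2 y) = n1 x" unfolding f'_def e1 using i1(1) wf(1) x(1) by (simp add: inv_into_f_f)
    moreover have "h' (p2 y) = p1 x" unfolding h'_def e1 using i1(2) wf(2) x(1) by (simp add: inv_into_f_f)
    ultimately show "n1 (h' y) = f' (n2 y) \<and> p1 (h' y) = h' (p2 y)" unfolding x_def by simp
  qed
  then show ?thesis unfolding A B hgraph_iso_def using b1 by blast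
qed

lemma conn_iso:
  assumes "wf_hgraph A" "connected_hgraph A" "hgraph_iso A B" shows "connected_hgraph B"
proof -
  obtain V1 H1 n1 p1 where A: "A = (V1,H1,n1,p1)" by (cases A) auto
  obtain V2 H2 n2 p2 where B: "B = (V2,H2,n2,p2)" by (cases B) auto
  obtain f h where fh: "bij_betw f V1 V2" "bij_betw h H1 H2" "\<forall>x\<in>H1. n2 (h x) = f (n1 x) \<and> p2 (h x) = h (p1 x)"
    using assms(3) unfolding A B hgraph_iso_def by auto
  have c: "V1 \<noteq> {}" "\<forall>u\<in>V1. \<forall>v\<in>V1. (u, v) \<in> (adjacent A)\<^sup>*" using assms(2) unfolding A connected_hgraph_def by auto
  have wf: "\<forall>x\<in>H1. p1 x \<in> H1" using assms(1) unfolding A wf_hgraph_def by auto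
  have V2: "V2 = f ` V1" using fh(1) by (simp add: bij_betw_def)
  have adj: "(f a, f b) \<in> adjacent B" if ab: "(a,b) \<in> adjacent A" for a b
  proof -
    obtain x where x: "x \<in> H1" "a = n1 x" "b = n1 (p1 x)" using ab unfolding A adjacent_def by auto
    have "h x \<in> H2" using x fh(2) bij_betwE by blast
    moreover have "f a = n2 (h x)" "f b = n2 (p2 (h x))" using fh(3) x wf by auto
    ultimately show ?thesis unfolding B adjacent_def by auto
  qed
  have "\<forall>u\<in>V2. \<forall>v\<in>V2. (u, v) \<in> (adjacent B)\<^sup>*"
  proof (intro ballI)
    fix u v assume "u \<in> V2" "v \<in> V2"
    then obtain u0 v0 where uv: "u0 \<in> V1" "v0 \<in> V1" "u = f u0" "v = f v0" unfolding V2 by auto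
    have "(u0, v0) \<in> (adjacent A)\<^sup>*" using c(2) uv by blast
    from rtrancl_map_lem[of "adjacent A" f "adjacent B", OF adj this]
    show "(u, v) \<in> (adjacent B)\<^sup>*" unfolding uv .
  qed
  moreover have "V2 \<noteq> {}" using c(1) V2 by simp
  ultimately show ?thesis unfolding connected_hgraph_def B by (simp only: prod.case) blast
qed

definition std :: "nat \<Rightarrow> (nat \<Rightarrow> nat) \<Rightarrow> hgraph" where
  "std k p = ({0..<k}, {0..<3*k}, \<lambda>x. x div 3, p)"

definition goodp :: "nat \<Rightarrow> (nat \<Rightarrow> nat) \<Rightarrow> bool" where
  "goodp k p \<longleftrightarrow> (\<forall>x. 3*k \<le> x \<longrightarrow> p x = x) \<and> (\<forall>x<3*k. p x < 3*k \<and> p (p x) = x)"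

definition fixc :: "nat \<Rightarrow> (nat \<Rightarrow> nat) \<Rightarrow> nat" where
  "fixc k p = card {x. x < 3*k \<and> p x = x}"

lemma init_std:
  assumes "surface_graph g n G"
  shows "\<exists>p. goodp (card (nodes G)) p \<and> fixc (card (nodes G)) p = n \<and> hgraph_iso G (std (card (nodes G)) p)"
proof -
  obtain V H node pair where G: "G = (V,H,node,pair)" by (cases G) auto
  define k where "k = card V"
  have ps: "pseudo_3_regular G" and fe: "card (free_edges G) = n" using assms unfolding surface_graph_def by auto
  have wf: "finite V" "finite H" "\<forall>x\<in>H. node x \<in> V" "\<forall>x\<in>H. pair x \<in> H \<and> pair (pair x) = x"
    using ps unfolding G pseudo_3_regular_def wf_hgraph_def by auto
  have deg: "\<forall>v\<in>V. card {x\<in>H. node x = v} = 3" using ps unfolding G pseudo_3_regular_def by auto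
  obtain f where f: "bij_betw f V {0..<k}" using ex_bij_betw_finite_nat[OF wf(1)] unfolding k_def by blast
  have "\<forall>v\<in>V. \<exists>e. bij_betw e {x\<in>H. node x = v} {0..<(3::nat)}"
  proof
    fix v assume "v \<in> V"
    have "finite {x\<in>H. node x = v}" using wf(2) by simp
    from ex_bij_betw_finite_nat[OF this] show "\<exists>e. bij_betw e {x\<in>H. node x = v} {0..<(3::nat)}"
      using deg \<open>v \<in> V\<close> by simp
  qed
  then obtain E where E: "\<forall>v\<in>V. bij_betw (E v) {x\<in>H. node x = v} {0..<(3::nat)}" by (rule bchoice[elim_format]) blast
  define h where "h x = 3 * f (node x) + E (node x) x" for x
  have Elt: "E (node x) x < 3" if "x \<in> H" for x
    using E wf(3) that bij_betwE by fastforce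
  have hdiv: "h x div 3 = f (node x)" if "x \<in> H" for x unfolding h_def using Elt[OF that] by simp
  have hmod: "h x mod 3 = E (node x) x" if "x \<in> H" for x unfolding h_def using Elt[OF that] by simp
  have injh: "inj_on h H"
  proof (rule inj_onI)
    fix x y assume xy: "x \<in> H" "y \<in> H" "h x = h y"
    then have "f (node x) = f (node y)" using hdiv[OF xy(1)] hdiv[OF xy(2)] by simp
    moreover have "inj_on f V" using f by (simp add: bij_betw_def)
    ultimately have nd: "node x = node y" using wf(3) xy(1,2) by (simp add: inj_on_def)
    have "E (node x) x = E (node x) y" using hmod[OF xy(1)] hmod[OF xy(2)] xy(3) nd by simp
    moreover have "inj_on (E (node x)) {z\<in>H. node z = node x}" using E wf(3) xy(1) by (simp add: bij_betw_def)
    ultimately show "x = y" using xy nd by (auto simp: inj_on_def)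
  qed
  have imh: "h ` H = {0..<3*k}"
  proof
    show "h ` H \<subseteq> {0..<3*k}"
    proof
      fix z assume "z \<in> h ` H"
      then obtain x where x: "x \<in> H" "z = h x" by auto
      have "f (node x) < k" using f wf(3) x(1) bij_betwE by fastforce
      then have "3 * f (node x) + E (node x) x < 3*k" using Elt[OF x(1)] by linarith
      then show "z \<in> {0..<3*k}" using x unfolding h_def by simp
    qed
  next
    show "{0..<3*k} \<subseteq> h ` H"
    proof
      fix z assume z: "z \<in> {0..<3*k}"
      then have "z < k * 3" by simp
      then have "z div 3 < k" by (rule less_mult_imp_div_less)
      moreover have "f ` V = {0..<k}" using f by (rule bij_betw_imp_surj_on)
      ultimately have "z div 3 \<in> f ` V" by simp
      then obtain v where v0: "v \<in> V" "z div 3 = f v" by (rule imageE)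
      have v: "v \<in> V" "f v = z div 3" using v0 by simp_all
      have "bij_betw (E v) {x\<in>H. node x = v} {0..<(3::nat)}" using E v(1) by blast
      then have im: "E v ` {x\<in>H. node x = v} = {0..<(3::nat)}" by (rule bij_betw_imp_surj_on)
      have "z mod 3 \<in> E v ` {x\<in>H. node x = v}" unfolding im by simp
      then obtain x where x0: "x \<in> {x\<in>H. node x = v}" "z mod 3 = E v x" by (rule imageE)
      have x: "x \<in> {x\<in>H. node x = v}" "E v x = z mod 3" using x0 by simp_all
      have nx: "node x = v" using x(1) by simp
      have "h x = 3 * (z div 3) + z mod 3" unfolding h_def nx v(2) x(2) by (rule refl)
      then have "h x = z" by simp
      moreover have "x \<in> H" using x(1) by simp
      ultimately show "z \<in> h ` H" by (metis image_eqI)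
    qed
  qed
  have bh: "bij_betw h H {0..<3*k}" using injh imh by (simp add: bij_betw_def)
  define h' where "h' = inv_into H h"
  have h'1: "h' z \<in> H" "h (h' z) = z" if "z < 3*k" for z
  proof -
    have "z \<in> h ` H" using that imh by simp
    then show "h' z \<in> H" "h (h' z) = z" unfolding h'_def by (rule inv_into_into, rule f_inv_into_f)
  qed
  have h'2: "h' (h x) = x" if "x \<in> H" for x unfolding h'_def using injh that by simp
  define p where "p z = (if z < 3*k then h (pair (h' z)) else z)" for z
  have hlt: "h x < 3*k" if "x \<in> H" for x using imh that by auto
  have good: "goodp k p"
    unfolding goodp_def
  proof (intro conjI allI impI)
    fix x assume "3*k \<le> x" then show "p x = x" unfolding p_def by simp
  next
    fix x assume x: "x < 3*k"
    have a: "pair (h' x) \<in> H" using wf(4) h'1[OF x] by simp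
    show "p x < 3*k" unfolding p_def using x hlt[OF a] by simp
    show "p (p x) = x" unfolding p_def using x hlt[OF a] h'2[OF a] wf(4) h'1[OF x] by simp
  qed
  have iso: "hgraph_iso G (std k p)"
    unfolding G std_def hgraph_iso_def
  proof (simp only: prod.case, intro exI conjI)
    show "bij_betw f V {0..<k}" by (rule f)
    show "bij_betw h H {0..<3*k}" by (rule bh)
    show "\<forall>x\<in>H. h x div 3 = f (node x) \<and> p (h x) = h (pair x)"
      using hdiv hlt h'2 unfolding p_def by simp
  qed
  have fx: "{x. x < 3*k \<and> p x = x} = h ` {x\<in>H. pair x = x}"
  proof
    show "{x. x < 3*k \<and> p x = x} \<subseteq> h ` {x\<in>H. pair x = x}"
    proof
      fix z assume "z \<in> {x. x < 3*k \<and> p x = x}"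
      then have z: "z < 3*k" "h (pair (h' z)) = z" unfolding p_def by auto
      have a: "pair (h' z) \<in> H" using wf(4) h'1[OF z(1)] by simp
      have "h (pair (h' z)) = h (h' z)" using z h'1 by simp
      then have "pair (h' z) = h' z" using injh a h'1[OF z(1)] by (auto simp: inj_on_def)
      then have "h' z \<in> {x\<in>H. pair x = x}" using h'1[OF z(1)] by simp
      then show "z \<in> h ` {x\<in>H. pair x = x}" using h'1[OF z(1)] by (intro image_eqI[of z h "h' z"]) auto
    qed
  next
    show "h ` {x\<in>H. pair x = x} \<subseteq> {x. x < 3*k \<and> p x = x}"
      using hlt h'2 unfolding p_def by auto
  qed
  have "fixc k p = card {x\<in>H. pair x = x}" unfolding fixc_def fx
    by (rule card_image) (rule inj_on_subset[OF injh], auto)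
  also have "\<dots> = n" using fe unfolding G free_edges_def by simp
  finally have "fixc k p = n" .
  moreover have "card (nodes G) = k" unfolding G nodes_def k_def by simp
  ultimately show ?thesis using good iso by auto
qed

lemma relabel:
  assumes good: "goodp k p"
    and sr: "\<And>x. \<sigma> (\<rho> x) = x" and rs: "\<And>x. \<rho> (\<sigma> x) = x"
    and lt: "\<And>x. x < 3*k \<longleftrightarrow> \<sigma> x < 3*k"
    and tau: "bij_betw \<tau> {0..<k} {0..<k}"
    and blk: "\<And>x. x < 3*k \<Longrightarrow> \<sigma> x div 3 = \<tau> (x div 3)"
  shows "hgraph_iso (std k p) (std k (\<sigma> \<circ> p \<circ> \<rho>)) \<and> goodp k (\<sigma> \<circ> p \<circ> \<rho>) \<and> fixc k (\<sigma> \<circ> p \<circ> \<rho>) = fixc k p"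
proof -
  have rlt: "x < 3*k \<longleftrightarrow> \<rho> x < 3*k" for x using lt[of "\<rho> x"] sr by simp
  have g: "\<forall>x. 3*k \<le> x \<longrightarrow> p x = x" "\<forall>x<3*k. p x < 3*k \<and> p (p x) = x" using good unfolding goodp_def by auto
  have bs: "bij_betw \<sigma> {0..<3*k} {0..<3*k}"
    by (rule bij_betw_byWitness[where f'=\<rho>]) (use rs sr lt rlt in auto)
  have iso: "hgraph_iso (std k p) (std k (\<sigma> \<circ> p \<circ> \<rho>))"
    unfolding std_def hgraph_iso_def
  proof (simp only: prod.case, intro exI conjI)
    show "bij_betw \<tau> {0..<k} {0..<k}" by (rule tau)
    show "bij_betw \<sigma> {0..<3*k} {0..<3*k}" by (rule bs)
    show "\<forall>x\<in>{0..<3*k}. \<sigma> x div 3 = \<tau> (x div 3) \<and> (\<sigma> \<circ> p \<circ> \<rho>) (\<sigma> x) = \<sigma> (p x)"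
      using blk rs by simp
  qed
  have gd: "goodp k (\<sigma> \<circ> p \<circ> \<rho>)" unfolding goodp_def
  proof (intro conjI allI impI)
    fix x assume x: "3*k \<le> x"
    then have "\<not> \<rho> x < 3*k" using rlt by simp
    then show "(\<sigma> \<circ> p \<circ> \<rho>) x = x" using g(1) sr by simp
  next
    fix x assume x: "x < 3*k"
    then have r: "\<rho> x < 3*k" using rlt by simp
    show "(\<sigma> \<circ> p \<circ> \<rho>) x < 3*k" using g(2) r lt by simp
    show "(\<sigma> \<circ> p \<circ> \<rho>) ((\<sigma> \<circ> p \<circ> \<rho>) x) = x" using g(2) r rs sr by simp
  qed
  have fx: "{x. x < 3*k \<and> (\<sigma> \<circ> p \<circ> \<rho>) x = x} = \<sigma> ` {x. x < 3*k \<and> p x = x}"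
  proof
    show "{x. x < 3*k \<and> (\<sigma> \<circ> p \<circ> \<rho>) x = x} \<subseteq> \<sigma> ` {x. x < 3*k \<and> p x = x}"
    proof
      fix x assume "x \<in> {x. x < 3*k \<and> (\<sigma> \<circ> p \<circ> \<rho>) x = x}"
      then have x: "x < 3*k" "\<sigma> (p (\<rho> x)) = x" by auto
      then have "\<rho> (\<sigma> (p (\<rho> x))) = \<rho> x" by simp
      then have "p (\<rho> x) = \<rho> x" using rs by simp
      moreover have "\<rho> x < 3*k" using x rlt by simp
      ultimately have "\<rho> x \<in> {x. x < 3*k \<and> p x = x}" by simp
      then show "x \<in> \<sigma> ` {x. x < 3*k \<and> p x = x}" using sr by (intro image_eqI[of x \<sigma> "\<rho> x"]) auto
    qed
  next
    show "\<sigma> ` {x. x < 3*k \<and> p x = x} \<subseteq> {x. x < 3*k \<and> (\<sigma> \<circ> p \<circ> \<rho>) x = x}"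
      using rs lt by auto
  qed
  have "fixc k (\<sigma> \<circ> p \<circ> \<rho>) = fixc k p" unfolding fixc_def fx
    by (rule card_image) (rule inj_onI, metis rs)
  then show ?thesis using iso gd by simp
qed

lemma adjacent_std: "adjacent (std k p) = {(x div 3, p x div 3) | x. x < 3*k}"
  unfolding adjacent_def std_def by auto

lemma boundary:
  assumes "connected_hgraph (std k p)" "1 \<le> i" "i < k"
  shows "\<exists>x<3*i. 3*i \<le> p x"
proof (rule ccontr)
  assume "\<not> (\<exists>x<3*i. 3*i \<le> p x)"
  then have cl: "\<forall>x<3*i. p x < 3*i" by auto
  have reach: "v < i" if "(0, v) \<in> (adjacent (std k p))\<^sup>*" for v
    using that
  proof (induction rule: rtrancl_induct)
    case base then show ?case using assms by simp
  next
    case (step y z)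
    then obtain x where x: "x < 3*k" "y = x div 3" "z = p x div 3" unfolding adjacent_std by auto
    have "x < 3*i" using x step.IH by linarith
    then have "p x < 3*i" using cl by simp
    then show ?case using x by linarith
  qed
  have "(0, i) \<in> (adjacent (std k p))\<^sup>*" using assms(1,3) unfolding connected_hgraph_def std_def by auto
  then show False using reach by blast
qed

definition canon :: "nat \<Rightarrow> (nat \<Rightarrow> nat) \<Rightarrow> nat \<Rightarrow> bool" where
  "canon k p i \<longleftrightarrow> (\<forall>j. 1 \<le> j \<longrightarrow> j < i \<longrightarrow> p (3*j) < 3*j \<and> (\<forall>x<3*j. 3*j \<le> p x \<longrightarrow> p (3*j) \<le> x))"

definition tr :: "nat \<Rightarrow> nat \<Rightarrow> nat \<Rightarrow> nat" where
  "tr a b x = (if x = a then b else if x = b then a else x)"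

definition bsw :: "nat \<Rightarrow> nat \<Rightarrow> nat \<Rightarrow> nat" where
  "bsw i w x = (if x div 3 = i then 3*w + x mod 3 else if x div 3 = w then 3*i + x mod 3 else x)"

lemma tr_inv: "tr a b (tr a b x) = x" unfolding tr_def by auto

lemma bsw_inv: "bsw i w (bsw i w x) = x"
proof -
  have d: "(3*c + x mod 3) div 3 = c" "(3*c + x mod 3) mod 3 = x mod 3" for c by simp_all
  have x: "3 * (x div 3) + x mod 3 = x" by simp
  show ?thesis
  proof (cases "x div 3 = i")
    case True then show ?thesis unfolding bsw_def d using x by auto
  next
    case False
    show ?thesis
    proof (cases "x div 3 = w")
      case True then show ?thesis using False unfolding bsw_def d using x by auto
    next
      case False2: False
      then show ?thesis using False unfolding bsw_def by auto
    qed
  qed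
qed

lemma bsw_div: "bsw i w x div 3 = tr i w (x div 3)"
  unfolding bsw_def tr_def by auto

lemma bsw_fix: "x div 3 \<noteq> i \<Longrightarrow> x div 3 \<noteq> w \<Longrightarrow> bsw i w x = x"
  unfolding bsw_def by auto

lemma bsw_lt: assumes "i < k" "w < k" shows "x < 3*k \<longleftrightarrow> bsw i w x < 3*k"
proof -
  have a: "y < 3*k \<longleftrightarrow> y div 3 < k" for y by auto
  have "bsw i w x div 3 < k \<longleftrightarrow> x div 3 < k" unfolding bsw_div tr_def using assms by auto
  then show ?thesis using a by blast
qed

lemma tr_div: "a div 3 = b div 3 \<Longrightarrow> tr a b x div 3 = x div 3"
  unfolding tr_def by auto

lemma bfs_step:
  assumes good: "goodp k p" and conn: "connected_hgraph (std k p)" and ci: "canon k p i"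
    and i1: "1 \<le> i" and ik: "i < k"
  shows "\<exists>p'. goodp k p' \<and> fixc k p' = fixc k p \<and> hgraph_iso (std k p) (std k p') \<and> canon k p' (Suc i)"
proof -
  have g: "\<forall>x. 3*k \<le> x \<longrightarrow> p x = x" "\<forall>x<3*k. p x < 3*k \<and> p (p x) = x" using good unfolding goodp_def by auto
  obtain x1 where x1: "x1 < 3*i" "3*i \<le> p x1" using boundary[OF conn i1 ik] by blast
  define x0 where "x0 = (LEAST x. x < 3*i \<and> 3*i \<le> p x)"
  have x0: "x0 < 3*i" "3*i \<le> p x0" using LeastI[of "\<lambda>x. x < 3*i \<and> 3*i \<le> p x" x1] x1 unfolding x0_def by auto
  have x0min: "x0 \<le> x" if "x < 3*i" "3*i \<le> p x" for x unfolding x0_def using that by (intro Least_le) simp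
  define y where "y = p x0"
  have x0k: "x0 < 3*k" using x0 ik by simp
  have yk: "y < 3*k" "p y = x0" using g(2) x0k unfolding y_def by auto
  define w where "w = y div 3"
  have wi: "i \<le> w" "w < k" using x0 yk unfolding w_def y_def by auto
  define y1 where "y1 = bsw i w y"
  have y1e: "y1 = 3*i + y mod 3" unfolding y1_def bsw_def w_def by auto
  define \<sigma> where "\<sigma> x = tr (3*i) y1 (bsw i w x)" for x
  define \<rho> where "\<rho> x = bsw i w (tr (3*i) y1 x)" for x
  have sr: "\<sigma> (\<rho> x) = x" for x unfolding \<sigma>_def \<rho>_def by (simp add: bsw_inv tr_inv)
  have rs: "\<rho> (\<sigma> x) = x" for x unfolding \<sigma>_def \<rho>_def by (simp add: bsw_inv tr_inv)
  have y1k: "y1 < 3*k" "3*i \<le> y1" using y1e wi ik by auto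
  have trlt: "z < 3*k \<longleftrightarrow> tr (3*i) y1 z < 3*k" for z unfolding tr_def using y1k ik by auto
  have lt: "x < 3*k \<longleftrightarrow> \<sigma> x < 3*k" for x unfolding \<sigma>_def using trlt bsw_lt[OF ik wi(2)] by blast
  have tau: "bij_betw (tr i w) {0..<k} {0..<k}"
    by (rule bij_betw_byWitness[where f'="tr i w"]) (auto simp: tr_inv tr_def ik wi)
  have d1: "(3*i) div 3 = y1 div 3" using y1e by simp
  have blk: "\<sigma> x div 3 = tr i w (x div 3)" if "x < 3*k" for x
    unfolding \<sigma>_def tr_div[OF d1] bsw_div ..
  have fixs: "\<sigma> x = x" "\<rho> x = x" if "x < 3*i" for x
  proof -
    have "x div 3 \<noteq> i" "x div 3 \<noteq> w" using that wi by auto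
    then have b: "bsw i w x = x" by (rule bsw_fix)
    have t: "tr (3*i) y1 x = x" unfolding tr_def using that y1k by auto
    show "\<sigma> x = x" "\<rho> x = x" unfolding \<sigma>_def \<rho>_def using b t by simp_all
  qed
  have r3i: "\<rho> (3*i) = y" unfolding \<rho>_def tr_def y1_def by (simp add: bsw_inv)
  define p' where "p' = \<sigma> \<circ> p \<circ> \<rho>"
  have R: "hgraph_iso (std k p) (std k p') \<and> goodp k p' \<and> fixc k p' = fixc k p"
    unfolding p'_def by (rule relabel[OF good]) (use sr rs lt tau blk in auto)
  have key: "3*j \<le> p x" if "x < 3*i" "j \<le> i" "3*j \<le> p' x" for x j
  proof (cases "p x < 3*i")
    case True
    then have "p' x = p x" unfolding p'_def using fixs that(1) by simp
    then show ?thesis using that(3) by simp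
  next
    case False then show ?thesis using that(2) by simp
  qed
  have cp: "canon k p' (Suc i)" unfolding canon_def
  proof (intro allI impI)
    fix j assume j: "1 \<le> j" "j < Suc i"
    show "p' (3*j) < 3*j \<and> (\<forall>x<3*j. 3*j \<le> p' x \<longrightarrow> p' (3*j) \<le> x)"
    proof (cases "j < i")
      case True
      have c: "p (3*j) < 3*j" "\<forall>x<3*j. 3*j \<le> p x \<longrightarrow> p (3*j) \<le> x" using ci j True unfolding canon_def by auto
      have "p' (3*j) = p (3*j)" unfolding p'_def using fixs True c(1) by simp
      then show ?thesis using c key True by auto
    next
      case False
      then have ji: "j = i" using j by simp
      have "p' (3*i) = x0" unfolding p'_def using r3i yk fixs x0 by simp
      then show ?thesis unfolding ji using x0 key x0min by auto
    qed
  qed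
  show ?thesis using R cp by blast
qed

lemma bfs_all:
  assumes wf: "wf_hgraph G" and conn: "connected_hgraph G"
    and p0: "goodp k p0" "fixc k p0 = n" "hgraph_iso G (std k p0)"
  shows "\<exists>p. goodp k p \<and> fixc k p = n \<and> hgraph_iso G (std k p) \<and> canon k p k"
proof -
  have main: "Suc i \<le> k \<longrightarrow> (\<exists>p. goodp k p \<and> fixc k p = n \<and> hgraph_iso G (std k p) \<and> canon k p (Suc i))" for i
  proof (induction i)
    case 0
    have "canon k p0 (Suc 0)" unfolding canon_def by auto
    then show ?case using p0 by blast
  next
    case (Suc i)
    show ?case
    proof
      assume si: "Suc (Suc i) \<le> k"
      then obtain p where p: "goodp k p" "fixc k p = n" "hgraph_iso G (std k p)" "canon k p (Suc i)" using Suc.IH by auto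
      have c: "connected_hgraph (std k p)" by (rule conn_iso[OF wf conn p(3)])
      have s1: "1 \<le> Suc i" "Suc i < k" using si by auto
      obtain p' where p': "goodp k p'" "fixc k p' = fixc k p" "hgraph_iso (std k p) (std k p')" "canon k p' (Suc (Suc i))"
        using bfs_step[OF p(1) c p(4) s1] by blast
      have "hgraph_iso G (std k p')" by (rule iso_trans[OF p(3) p'(3)])
      then show "\<exists>p. goodp k p \<and> fixc k p = n \<and> hgraph_iso G (std k p) \<and> canon k p (Suc (Suc i))" using p' p by auto
    qed
  qed
  show ?thesis
  proof (cases "k = 0")
    case True
    have "canon k p0 k" unfolding canon_def True by auto
    then show ?thesis using p0 by blast
  next
    case False
    then have "Suc (k-1) = k" by simp
    then show ?thesis using main[of "k-1"] by simp
  qed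
qed

lemma mono_unique:
  fixes f g :: "nat \<Rightarrow> nat"
  assumes f: "\<And>i j. i \<in> I \<Longrightarrow> j \<in> I \<Longrightarrow> i < j \<Longrightarrow> f i < f j"
    and g: "\<And>i j. i \<in> I \<Longrightarrow> j \<in> I \<Longrightarrow> i < j \<Longrightarrow> g i < g j"
    and im: "f ` I = g ` I"
  shows "i \<in> I \<Longrightarrow> f i = g i"
proof (induction i rule: less_induct)
  case (less i)
  have "f i \<in> g ` I" using im less.prems by blast
  then obtain j where j: "j \<in> I" "f i = g j" by blast
  have ij: "i \<le> j"
  proof (rule ccontr)
    assume "\<not> i \<le> j"
    then have "j < i" by simp
    then have "f j = g j" using less.IH j(1) by simp
    moreover have "f j < f i" using f[OF j(1) less.prems \<open>j < i\<close>] .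
    ultimately show False using j(2) by simp
  qed
  have "g i \<in> f ` I" using im less.prems by blast
  then obtain j' where j': "j' \<in> I" "g i = f j'" by blast
  have ij': "i \<le> j'"
  proof (rule ccontr)
    assume "\<not> i \<le> j'"
    then have "j' < i" by simp
    then have "f j' = g j'" using less.IH j'(1) by simp
    moreover have "g j' < g i" using g[OF j'(1) less.prems \<open>j' < i\<close>] .
    ultimately show False using j'(2) by simp
  qed
  have "g i \<le> f i"
  proof (cases "i = j")
    case True then show ?thesis using j by simp
  next
    case False then have "i < j" using ij by simp
    then show ?thesis using g[OF less.prems j(1)] j(2) by simp
  qed
  moreover have "f i \<le> g i"
  proof (cases "i = j'")
    case True then show ?thesis using j' by simp
  next
    case False then have "i < j'" using ij' by simp
    then show ?thesis using f[OF less.prems j'(1)] j'(2) by simp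
  qed
  ultimately show ?case by simp
qed

definition CC :: "nat \<Rightarrow> nat \<Rightarrow> (nat \<Rightarrow> nat) set" where
  "CC k n = {p. goodp k p \<and> fixc k p = n \<and> canon k p k}"

lemma CC_finite: "finite (CC k n)"
proof -
  have "CC k n \<subseteq> {q::nat\<Rightarrow>nat. (\<forall>x. x \<notin> {0..<3*k} \<longrightarrow> q x = x) \<and> (\<forall>x\<in>{0..<3*k}. q x \<in> {0..<3*k})}"
    unfolding CC_def goodp_def by auto
  then show ?thesis by (rule finite_subset) (rule ext_funs_finite, simp)
qed

lemma cc_card:
  assumes k1: "k \<ge> 1" and kn: "k + 2 = n + 2*g"
  shows "card (CC k n) * (fact (k-1) * (fact n * 2^g * fact g)) \<le> fact (2*k+1)"
proof -
  define D where "D = (\<lambda>j. 3*j) ` {1..<k}"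
  define A where "A = {0..<3*k} - D"
  define I where "I = {1..<k}"
  define T where "T p = (\<lambda>j. p (3*j)) ` I" for p :: "nat \<Rightarrow> nat"
  define Q where "Q p = (\<lambda>x. if x \<in> A - T p then p x else x)" for p :: "nat \<Rightarrow> nat"
  define phi where "phi p = (T p, Q p)" for p
  define Sig where "Sig = Sigma {U. U \<subseteq> A \<and> card U = k - 1} (\<lambda>U. invs (A - U) n)"
  have cD: "card D = k - 1" unfolding D_def by (subst card_image) (auto simp: inj_on_def)
  have DA: "D \<subseteq> {0..<3*k}" unfolding D_def by auto
  have fA: "finite A" unfolding A_def by simp
  have fD: "finite D" unfolding D_def by simp
  have "card A = card {0..<3*k} - card D" unfolding A_def by (rule card_Diff_subset[OF fD DA])
  then have cA: "card A = 2*k+1" using cD k1 by simp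
  have props: "p (3*j) < 3*j" "p (p (3*j)) = 3*j" "\<forall>x<3*j. 3*j \<le> p x \<longrightarrow> p (3*j) \<le> x"
    if "p \<in> CC k n" "j \<in> I" for p j
  proof -
    have g: "goodp k p" "canon k p k" using that(1) unfolding CC_def by auto
    have jk: "1 \<le> j" "j < k" using that(2) unfolding I_def by auto
    show "p (3*j) < 3*j" "\<forall>x<3*j. 3*j \<le> p x \<longrightarrow> p (3*j) \<le> x" using g(2) jk unfolding canon_def by auto
    show "p (p (3*j)) = 3*j" using g(1) jk unfolding goodp_def by auto
  qed
  have incr: "p (3*i) < p (3*j)" if "p \<in> CC k n" "i \<in> I" "j \<in> I" "i < j" for p i j
  proof (cases "p (3*j) < 3*i")
    case True
    have a: "3*i \<le> p (p (3*j))" using props(2)[OF that(1) that(3)] that(4) by simp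
    have "p (3*i) \<le> p (3*j)" using props(3)[OF that(1) that(2)] True a by blast
    moreover have "p (3*i) \<noteq> p (3*j)"
    proof
      assume "p (3*i) = p (3*j)"
      then have "p (p (3*i)) = p (p (3*j))" by simp
      then show False using props(2)[OF that(1) that(2)] props(2)[OF that(1) that(3)] that(4) by simp
    qed
    ultimately show ?thesis by simp
  next
    case False
    then show ?thesis using props(1)[OF that(1) that(2)] by simp
  qed
  have notD: "p (3*j) \<notin> D" if "p \<in> CC k n" "j \<in> I" for p j
  proof
    assume "p (3*j) \<in> D"
    then obtain j' where j': "j' \<in> I" "p (3*j) = 3*j'" unfolding D_def I_def by auto
    have "p (3*j') = 3*j" using props(2)[OF that] j'(2) by simp
    moreover have "p (3*j') < 3*j'" using props(1)[OF that(1) j'(1)] .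
    moreover have "3*j' < 3*j" using props(1)[OF that] j'(2) by simp
    ultimately show False by simp
  qed
  have TA: "T p \<subseteq> A" if "p \<in> CC k n" for p
  proof
    fix x assume "x \<in> T p"
    then obtain j where j: "j \<in> I" "x = p (3*j)" unfolding T_def by auto
    have "x < 3*k" using props(1)[OF that j(1)] j unfolding I_def by auto
    then show "x \<in> A" unfolding A_def using notD[OF that j(1)] j by auto
  qed
  have cT: "card (T p) = k - 1" if "p \<in> CC k n" for p
  proof -
    have "inj_on (\<lambda>j. p (3*j)) I"
    proof (rule inj_onI)
      fix a b assume ab: "a \<in> I" "b \<in> I" "p (3*a) = p (3*b)"
      show "a = b"
      proof (rule ccontr)
        assume "a \<noteq> b"
        then have "a < b \<or> b < a" by auto
        then show False using incr[OF that ab(1) ab(2)] incr[OF that ab(2) ab(1)] ab(3) by auto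
      qed
    qed
    then show ?thesis unfolding T_def I_def by (simp add: card_image)
  qed
  have pin: "p x \<in> A - T p" if "p \<in> CC k n" "x \<in> A - T p" for p x
  proof -
    have g: "goodp k p" using that(1) unfolding CC_def by auto
    have x: "x < 3*k" "x \<notin> D" "x \<notin> T p" using that(2) unfolding A_def by auto
    have px: "p x < 3*k" "p (p x) = x" using g x(1) unfolding goodp_def by auto
    have "p x \<notin> D"
    proof
      assume "p x \<in> D"
      then obtain j where j: "j \<in> I" "p x = 3*j" unfolding D_def I_def by auto
      then have "x = p (3*j)" using px(2) by simp
      then show False using x(3) j(1) unfolding T_def by auto
    qed
    moreover have "p x \<notin> T p"
    proof
      assume "p x \<in> T p"
      then obtain j where j: "j \<in> I" "p x = p (3*j)" unfolding T_def by auto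
      then have "x = 3*j" using px(2) props(2)[OF that(1) j(1)] by metis
      then show False using x(2) j(1) unfolding D_def I_def by auto
    qed
    ultimately show ?thesis using px(1) unfolding A_def by auto
  qed
  have fixin: "{x. x < 3*k \<and> p x = x} = {x \<in> A - T p. Q p x = x}" if "p \<in> CC k n" for p
  proof
    show "{x. x < 3*k \<and> p x = x} \<subseteq> {x \<in> A - T p. Q p x = x}"
    proof
      fix x assume "x \<in> {x. x < 3*k \<and> p x = x}"
      then have x: "x < 3*k" "p x = x" by auto
      have "x \<notin> D"
      proof
        assume "x \<in> D"
        then obtain j where j: "j \<in> I" "x = 3*j" unfolding D_def I_def by auto
        then show False using props(1)[OF that j(1)] x(2) by simp
      qed
      moreover have "x \<notin> T p"
      proof
        assume "x \<in> T p"
        then obtain j where j: "j \<in> I" "x = p (3*j)" unfolding T_def by auto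
        then have "p x = 3*j" using props(2)[OF that j(1)] by simp
        then show False using x(2) j(2) props(1)[OF that j(1)] by simp
      qed
      ultimately show "x \<in> {x \<in> A - T p. Q p x = x}" using x unfolding A_def Q_def by auto
    qed
  next
    show "{x \<in> A - T p. Q p x = x} \<subseteq> {x. x < 3*k \<and> p x = x}" unfolding Q_def A_def by auto
  qed
  have img: "phi ` CC k n \<subseteq> Sig"
  proof
    fix z assume "z \<in> phi ` CC k n"
    then obtain p where p: "p \<in> CC k n" "z = phi p" by auto
    have "Q p \<in> invs (A - T p) n"
      unfolding invs_def
    proof (intro CollectI conjI allI impI ballI)
      fix x assume "x \<notin> A - T p" then show "Q p x = x" unfolding Q_def by auto
    next
      fix x assume x: "x \<in> A - T p"
      have "p x \<in> A - T p" by (rule pin[OF p(1) x])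
      then show "Q p x \<in> A - T p" using x unfolding Q_def by simp
      have g: "goodp k p" using p(1) unfolding CC_def by auto
      have "x < 3*k" using x unfolding A_def by auto
      then have "p (p x) = x" using g unfolding goodp_def by auto
      then show "Q p (Q p x) = x" using x \<open>p x \<in> A - T p\<close> unfolding Q_def by simp
    next
      have "card {x \<in> A - T p. Q p x = x} = fixc k p" unfolding fixc_def fixin[OF p(1)] ..
      then show "card {x \<in> A - T p. Q p x = x} = n" using p(1) unfolding CC_def by simp
    qed
    then show "z \<in> Sig" unfolding Sig_def p(2) phi_def using TA[OF p(1)] cT[OF p(1)] by auto
  qed
  have inj: "inj_on phi (CC k n)"
  proof (rule inj_onI)
    fix p1 p2 assume p1: "p1 \<in> CC k n" and p2: "p2 \<in> CC k n" and e: "phi p1 = phi p2"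
    have eT: "T p1 = T p2" and eQ: "Q p1 = Q p2" using e unfolding phi_def by auto
    have et: "p1 (3*j) = p2 (3*j)" if "j \<in> I" for j
      by (rule mono_unique[where I=I and f="\<lambda>j. p1 (3*j)" and g="\<lambda>j. p2 (3*j)", OF _ _ _ that])
        (use incr[OF p1] incr[OF p2] eT in \<open>auto simp: T_def\<close>)
    have g1: "goodp k p1" and g2: "goodp k p2" using p1 p2 unfolding CC_def by auto
    show "p1 = p2"
    proof
      fix x
      show "p1 x = p2 x"
      proof (cases "x < 3*k")
        case False then show ?thesis using g1 g2 unfolding goodp_def by auto
      next
        case True
        show ?thesis
        proof (cases "x \<in> D")
          case True
          then obtain j where j: "j \<in> I" "x = 3*j" unfolding D_def I_def by auto
          then show ?thesis using et by simp
        next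
          case nD: False
          show ?thesis
          proof (cases "x \<in> T p1")
            case True
            then obtain j where j: "j \<in> I" "x = p1 (3*j)" unfolding T_def by auto
            have "p1 x = 3*j" using props(2)[OF p1 j(1)] j by simp
            moreover have "p2 x = 3*j" using props(2)[OF p2 j(1)] j et by simp
            ultimately show ?thesis by simp
          next
            case False
            then have xa: "x \<in> A - T p1" "x \<in> A - T p2" using nD \<open>x < 3*k\<close> eT unfolding A_def by auto
            have "Q p1 x = Q p2 x" using eQ by simp
            then show ?thesis using xa unfolding Q_def by simp
          qed
        qed
      qed
    qed
  qed
  have fU: "finite {U. U \<subseteq> A \<and> card U = k - 1}" using fA by simp
  have fSig: "finite Sig" unfolding Sig_def
    by (rule finite_SigmaI[OF fU]) (use invs_finite fA in auto)
  have c1: "card (CC k n) \<le> card Sig" by (rule card_inj_on_le[OF inj img fSig])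
  have cSig: "card Sig = (\<Sum>U\<in>{U. U \<subseteq> A \<and> card U = k - 1}. card (invs (A - U) n))"
    unfolding Sig_def by (rule card_SigmaI[OF fU]) (use invs_finite fA in auto)
  define F :: nat where "F = fact n * 2^g * fact g"
  have each: "card (invs (A - U) n) * F \<le> fact (k+2)" if "U \<in> {U. U \<subseteq> A \<and> card U = k - 1}" for U
  proof -
    have U: "U \<subseteq> A" "card U = k - 1" using that by auto
    have fU': "finite U" using finite_subset[OF U(1) fA] .
    have cAU: "card (A - U) = n + 2*g" using U cA kn k1 fA by (simp add: card_Diff_subset fU')
    have "card (invs (A - U) n) * F \<le> fact (card (A - U))"
      unfolding F_def by (rule invs_card) (use fA cAU in auto)
    then show ?thesis using cAU kn by simp
  qed
  have "card Sig * F = (\<Sum>U\<in>{U. U \<subseteq> A \<and> card U = k - 1}. card (invs (A - U) n) * F)"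
    unfolding cSig by (simp add: sum_distrib_right)
  also have "\<dots> \<le> (\<Sum>U\<in>{U. U \<subseteq> A \<and> card U = k - 1}. fact (k+2))" by (rule sum_mono) (rule each)
  also have "\<dots> = ((2*k+1) choose (k-1)) * fact (k+2)" using n_subsets[OF fA, of "k-1"] cA by simp
  finally have c2: "card Sig * F \<le> ((2*k+1) choose (k-1)) * fact (k+2)" .
  have bf: "fact (k-1) * fact (2*k+1 - (k-1)) * ((2*k+1) choose (k-1)) = (fact (2*k+1) :: nat)"
    by (rule binomial_fact_lemma) simp
  have e3: "2*k+1 - (k-1) = k+2" using k1 by simp
  have "card (CC k n) * (fact (k-1) * F) \<le> card Sig * (fact (k-1) * F)" using c1 by simp
  also have "\<dots> = fact (k-1) * (card Sig * F)" by simp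
  also have "\<dots> \<le> fact (k-1) * (((2*k+1) choose (k-1)) * fact (k+2))" using c2 by simp
  also have "\<dots> = fact (2*k+1)" using bf unfolding e3 by (simp add: algebra_simps)
  finally show ?thesis unfolding F_def .
qed

theorem proposition2p4:
  fixes g n :: nat
  assumes "n \<ge> 1"
  shows "num_surface_graphs g n \<le> n * g ^ (3 * g) * (3 * g + 3 * n - 3) ^ n"
proof -
  define S where "S = {G. surface_graph g n G}"
  define R where "R = {(G1, G2). hgraph_iso G1 G2}"
  have num: "num_surface_graphs g n = card (S // R)" unfolding num_surface_graphs_def S_def R_def ..
  show ?thesis
  proof (cases "S = {}")
    case True
    then have "S // R = {}" by (simp add: quotient_def)
    then show ?thesis unfolding num by simp
  next
    case False
    then obtain G0 where G0: "G0 \<in> S" by blast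
    define k where "k = card (nodes G0)"
    have sg: "surface_graph g n G" if "G \<in> S" for G using that unfolding S_def by simp
    have kint: "int (card (nodes G)) = 2 * int g - 2 + int n" if "G \<in> S" for G
      using sg[OF that] unfolding surface_graph_def by simp
    have kG: "card (nodes G) = k" if "G \<in> S" for G using kint[OF that] kint[OF G0] unfolding k_def by simp
    have wfc: "wf_hgraph G" "connected_hgraph G" if "G \<in> S" for G
      using sg[OF that] unfolding surface_graph_def pseudo_3_regular_def by (auto split: prod.splits)
    have k1: "k \<ge> 1"
    proof -
      obtain V H nd pr where G: "G0 = (V,H,nd,pr)" by (cases G0) auto
      have "V \<noteq> {}" using wfc(2)[OF G0] unfolding G connected_hgraph_def by simp
      moreover have "finite V" using wfc(1)[OF G0] unfolding G wf_hgraph_def by simp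
      ultimately have "card V \<ge> 1" by (simp add: Suc_leI card_gt_0_iff)
      then show ?thesis unfolding k_def G nodes_def by simp
    qed
    have kn: "k + 2 = n + 2*g" using kint[OF G0] unfolding k_def by simp
    have sub: "S // R \<subseteq> (\<lambda>p. R `` {std k p}) ` CC k n"
    proof
      fix X assume "X \<in> S // R"
      then obtain G where G: "G \<in> S" "X = R `` {G}" by (rule quotientE)
      obtain p0 where p0: "goodp k p0" "fixc k p0 = n" "hgraph_iso G (std k p0)"
        using init_std[OF sg[OF G(1)]] kG[OF G(1)] by auto
      obtain p where p: "goodp k p" "fixc k p = n" "hgraph_iso G (std k p)" "canon k p k"
        using bfs_all[OF wfc[OF G(1)] p0] by blast
      have pc: "p \<in> CC k n" unfolding CC_def using p by simp
      have "R `` {G} = R `` {std k p}"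
      proof
        show "R `` {G} \<subseteq> R `` {std k p}"
        proof
          fix G' assume "G' \<in> R `` {G}"
          then have "hgraph_iso G G'" unfolding R_def by simp
          moreover have "hgraph_iso (std k p) G" by (rule iso_sym[OF wfc(1)[OF G(1)] p(3)])
          ultimately have "hgraph_iso (std k p) G'" using iso_trans by blast
          then show "G' \<in> R `` {std k p}" unfolding R_def by simp
        qed
      next
        show "R `` {std k p} \<subseteq> R `` {G}"
        proof
          fix G' assume "G' \<in> R `` {std k p}"
          then have "hgraph_iso (std k p) G'" unfolding R_def by simp
          then have "hgraph_iso G G'" using iso_trans[OF p(3)] by blast
          then show "G' \<in> R `` {G}" unfolding R_def by simp
        qed
      qed
      then show "X \<in> (\<lambda>p. R `` {std k p}) ` CC k n" using G(2) pc by blast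
    qed
    have c1: "card (S // R) \<le> card (CC k n)"
    proof -
      have "card (S // R) \<le> card ((\<lambda>p. R `` {std k p}) ` CC k n)"
        by (rule card_mono[OF finite_imageI[OF CC_finite] sub])
      also have "\<dots> \<le> card (CC k n)" by (rule card_image_le[OF CC_finite])
      finally show ?thesis .
    qed
    define X :: nat where "X = fact (k-1) * (fact n * 2^g * fact g)"
    have c2: "card (CC k n) * X \<le> fact (2*k+1)" unfolding X_def by (rule cc_card[OF k1 kn])
    have ke: "2*g+n-2 = k" using kn by simp
    have P: "PP g n" using PP_all[OF assms] kn k1 by simp
    have c3: "fact (2*k+1) \<le> BB g n * X" using P unfolding PP_def ke X_def by (simp add: mult.assoc)
    have Xpos: "X > 0" unfolding X_def by simp
    have "card (CC k n) * X \<le> BB g n * X" using c2 c3 by linarith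
    then have "card (CC k n) \<le> BB g n" using Xpos by simp
    then show ?thesis unfolding num BB_def using c1 by simp
  qed
qed

end
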